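(* Let $n\ge 2$ and let $M$ be a uniformly random $n\times n$ matrix with independent entries uniform on $\{-1,+1\}$. Let $R_{11}$ be the event that two distinct columns of $M$ are equal up to sign, and $L_{11}$ the event that two distinct rows of $M$ are equal up to sign. Then $$\mathbb{P}(R_{11}\setminus L_{11})\ \ge\ 2\binom n2\Big(\frac12\Big)^n-\Big(12\binom n2^2-4\binom n2\Big)\Big(\frac14\Big)^n,$$ and, as $n\to\infty$, $$\mathbb{P}(R_{11}\setminus L_{11})=\mathbb{P}(R_{11})-8\binom n2^2\Big(\frac14\Big)^n+O\big(n^6 2^{-3n}\big).$$
   Context: Vectors $x,y\in\{-1,1\}^n$ are equal up to sign if $x=\pm y$. Equivalently, $R_{11}$ (resp. $L_{11}$) is the event that $M$ has a right null vector $Mv=0$ (resp. left null vector $vM=0$) of the form $e_i\pm e_j$, $i\ne j$. *)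

theory Defs
  imports "HOL-Probability.Probability" "HOL-Library.Landau_Symbols"
begin

text \<open>n x n sign matrices, indexed by {0..<n} x {0..<n}; entries outside the
  index range are fixed to 0 so that the set is finite.\<close>
definition sign_mats :: "nat \<Rightarrow> (nat \<Rightarrow> nat \<Rightarrow> int) set" where
  "sign_mats n = {M. (\<forall>i j. i < n \<and> j < n \<longrightarrow> M i j \<in> {-1, 1}) \<and>
                      (\<forall>i j. \<not> (i < n \<and> j < n) \<longrightarrow> M i j = 0)}"

definition rand_mat :: "nat \<Rightarrow> (nat \<Rightarrow> nat \<Rightarrow> int) pmf" where
  "rand_mat n = pmf_of_set (sign_mats n)"

definition R11 :: "nat \<Rightarrow> (nat \<Rightarrow> nat \<Rightarrow> int) set" where
  "R11 n = {M \<in> sign_mats n. \<exists>i<n. \<exists>j<n. i \<noteq> j \<and>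
      ((\<forall>k<n. M k i = M k j) \<or> (\<forall>k<n. M k i = - M k j))}"

definition L11 :: "nat \<Rightarrow> (nat \<Rightarrow> nat \<Rightarrow> int) set" where
  "L11 n = {M \<in> sign_mats n. \<exists>i<n. \<exists>j<n. i \<noteq> j \<and>
      ((\<forall>k<n. M i k = M j k) \<or> (\<forall>k<n. M i k = - M j k))}"

end

theory Submission
  imports Defs
begin


definition rowrel :: "nat \<Rightarrow> (nat\<Rightarrow>nat\<Rightarrow>int) \<Rightarrow> nat \<Rightarrow> nat \<Rightarrow> bool" where
  "rowrel n M a b \<longleftrightarrow> (\<exists>t\<in>{-1,1}. \<forall>y<n. M a y = t * M b y)"
definition colrel :: "nat \<Rightarrow> (nat\<Rightarrow>nat\<Rightarrow>int) \<Rightarrow> nat \<Rightarrow> nat \<Rightarrow> bool" where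
  "colrel n M a b \<longleftrightarrow> (\<exists>t\<in>{-1,1}. \<forall>x<n. M x a = t * M x b)"

definition Ev where
  "Ev n DR DC sr sc = {M \<in> sign_mats n. (\<forall>r\<in>DR. rowrel n M r (sr r)) \<and> (\<forall>d\<in>DC. colrel n M d (sc d))}"

lemma rowrel_val:
  assumes "rowrel n M a b" "M b y0 \<in> {-1,1}" "y < n" and that: "y0<n"
  shows "M a y = (M a y0 * M b y0) * M b y" "M a y0 * M b y0 \<in> {-1,1}"
proof -
  from assms obtain t where t: "t\<in>{-1,1}" "\<forall>y<n. M a y = t * M b y" unfolding rowrel_def by blast
  have sq: "M b y0 * M b y0 = 1" using assms(2) by auto
  have "M a y0 * M b y0 = t" using t that sq by (metis mult.assoc mult.right_neutral)
  then show "M a y = (M a y0 * M b y0) * M b y" "M a y0 * M b y0 \<in> {-1,1}" using t assms by auto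
qed

lemma colrel_val:
  assumes "colrel n M a b" "M x0 b \<in> {-1,1}" "x < n" and that: "x0<n"
  shows "M x a = (M x0 a * M x0 b) * M x b" "M x0 a * M x0 b \<in> {-1,1}"
proof -
  from assms obtain t where t: "t\<in>{-1,1}" "\<forall>x<n. M x a = t * M x b" unfolding colrel_def by blast
  have sq: "M x0 b * M x0 b = 1" using assms(2) by auto
  have "M x0 a * M x0 b = t" using t that sq by (metis mult.assoc mult.right_neutral)
  then show "M x a = (M x0 a * M x0 b) * M x b" "M x0 a * M x0 b \<in> {-1,1}" using t assms by auto
qed

lemma pm1_mult: "(a::int) \<in> {-1,1} \<Longrightarrow> b \<in> {-1,1} \<Longrightarrow> a * b \<in> {-1,1}"
  by auto

lemma card_Ev:
  assumes DR: "DR \<subseteq> {..<n}" and DC: "DC \<subseteq> {..<n}"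
    and sr: "\<And>r. r\<in>DR \<Longrightarrow> sr r < n \<and> sr r \<notin> DR"
    and sc: "\<And>d. d\<in>DC \<Longrightarrow> sc d < n \<and> sc d \<notin> DC"
    and x0: "x0 < n" "x0 \<notin> DR" and y0: "y0 < n" "y0 \<notin> DC"
  shows "card (Ev n DR DC sr sc) = 2 ^ (card DR + card DC + (n - card DR) * (n - card DC))"
proof -
  define F where "F = ({..<n} - DR) \<times> ({..<n} - DC)"
  define Cod where "Cod = (PiE DR (\<lambda>_. {-1,1::int})) \<times> (PiE DC (\<lambda>_. {-1,1::int})) \<times> (PiE F (\<lambda>_. {-1,1::int}))"
  define srp where "srp x = (if x \<in> DR then sr x else x)" for x
  define scp where "scp y = (if y \<in> DC then sc y else y)" for y
  define ext :: "(nat\<Rightarrow>int) \<times> (nat\<Rightarrow>int) \<times> (nat\<times>nat\<Rightarrow>int) \<Rightarrow> nat \<Rightarrow> nat \<Rightarrow> int" where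
    "ext = (\<lambda>(\<tau>,\<sigma>,f) x y. if x < n \<and> y < n then (if x \<in> DR then \<tau> x else 1) * (if y \<in> DC then \<sigma> y else 1) * f (srp x, scp y) else 0)"
  have finDR: "finite DR" using DR finite_subset by blast
  have finDC: "finite DC" using DC finite_subset by blast
  have srpF: "(srp x, scp y) \<in> F" if "x<n" "y<n" for x y
    using that sr sc unfolding F_def srp_def scp_def by auto
  have cardF: "card F = (n - card DR) * (n - card DC)"
    unfolding F_def card_cartesian_product using DR DC
    by (simp add: card_Diff_subset finDR finDC)
  have cardCod: "card Cod = 2 ^ (card DR + card DC + (n - card DR) * (n - card DC))"
    unfolding Cod_def card_cartesian_product
    by (simp add: card_PiE finDR finDC F_def cardF[unfolded F_def] power_add numeral_2_eq_2 mult.assoc)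
  have sub1: "ext ` Cod \<subseteq> Ev n DR DC sr sc"
  proof
    fix M assume "M \<in> ext ` Cod"
    then obtain \<tau> \<sigma> f where c: "(\<tau>,\<sigma>,f) \<in> Cod" and M: "M = ext (\<tau>,\<sigma>,f)" by auto
    have tv: "\<tau> r \<in> {-1,1}" if "r\<in>DR" for r using c that unfolding Cod_def by auto
    have sv: "\<sigma> r \<in> {-1,1}" if "r\<in>DC" for r using c that unfolding Cod_def by auto
    have fv: "f p \<in> {-1,1}" if "p\<in>F" for p using c that unfolding Cod_def by auto
    have "M \<in> sign_mats n"
    proof -
      have "M x y \<in> {-1,1}" if "x<n" "y<n" for x y
      proof -
        have a: "(if x \<in> DR then \<tau> x else 1) \<in> {-1,1}" using tv by auto
        have b: "(if y \<in> DC then \<sigma> y else 1) \<in> {-1,1}" using sv by auto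
        have c: "f (srp x, scp y) \<in> {-1,1}" using fv srpF that by auto
        show ?thesis using pm1_mult[OF pm1_mult[OF a b] c] that unfolding M ext_def by simp
      qed
      then show ?thesis unfolding sign_mats_def M ext_def by auto
    qed
    moreover have "rowrel n M r (sr r)" if "r \<in> DR" for r
      unfolding rowrel_def
    proof (rule bexI[of _ "\<tau> r"])
      show "\<tau> r \<in> {-1,1}" using tv that .
      show "\<forall>y<n. M r y = \<tau> r * M (sr r) y"
        using that sr[OF that] DR unfolding M ext_def srp_def by auto
    qed
    moreover have "colrel n M d (sc d)" if "d \<in> DC" for d
      unfolding colrel_def
    proof (rule bexI[of _ "\<sigma> d"])
      show "\<sigma> d \<in> {-1,1}" using sv that .
      show "\<forall>x<n. M x d = \<sigma> d * M x (sc d)"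
        using that sc[OF that] DC unfolding M ext_def scp_def by auto
    qed
    ultimately show "M \<in> Ev n DR DC sr sc" unfolding Ev_def by auto
  qed
  have inj: "inj_on ext Cod"
  proof (rule inj_onI)
    fix a b assume a: "a \<in> Cod" and b: "b \<in> Cod" and e: "ext a = ext b"
    obtain \<tau> \<sigma> f where aa: "a = (\<tau>,\<sigma>,f)" by (cases a) auto
    obtain \<tau>' \<sigma>' f' where bb: "b = (\<tau>',\<sigma>',f')" by (cases b) auto
    have fv: "f p \<in> {-1,1}" if "p\<in>F" for p using a that unfolding aa Cod_def by auto
    have ff: "f p = f' p" if "p \<in> F" for p
    proof -
      obtain x y where p: "p = (x,y)" by (cases p)
      have "ext a x y = ext b x y" using e by simp
      then show ?thesis using that unfolding p aa bb ext_def F_def srp_def scp_def by auto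
    qed
    have f: "f = f'" using a b ff unfolding aa bb Cod_def by (auto intro: PiE_ext)
    have tt: "\<tau> r = \<tau>' r" if "r\<in>DR" for r
    proof -
      have "ext a r y0 = ext b r y0" using e by simp
      then have "\<tau> r * f (sr r, y0) = \<tau>' r * f (sr r, y0)"
        using that DR y0 f unfolding aa bb ext_def srp_def scp_def by auto
      moreover have "f (sr r, y0) \<in> {-1,1}" using fv sr[OF that] y0 unfolding F_def by auto
      ultimately show ?thesis by auto
    qed
    have ss: "\<sigma> r = \<sigma>' r" if "r\<in>DC" for r
    proof -
      have "ext a x0 r = ext b x0 r" using e by simp
      then have "\<sigma> r * f (x0, sc r) = \<sigma>' r * f (x0, sc r)"
        using that DC x0 f unfolding aa bb ext_def srp_def scp_def by auto
      moreover have "f (x0, sc r) \<in> {-1,1}" using fv sc[OF that] x0 unfolding F_def by auto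
      ultimately show ?thesis by auto
    qed
    have "\<tau> = \<tau>'" using a b tt unfolding aa bb Cod_def by (auto intro: PiE_ext)
    moreover have "\<sigma> = \<sigma>'" using a b ss unfolding aa bb Cod_def by (auto intro: PiE_ext)
    ultimately show "a = b" using f aa bb by simp
  qed
  have sub2: "Ev n DR DC sr sc \<subseteq> ext ` Cod"
  proof
    fix M assume M: "M \<in> Ev n DR DC sr sc"
    have sm: "M \<in> sign_mats n" and rr: "\<And>r. r\<in>DR \<Longrightarrow> rowrel n M r (sr r)"
      and cc: "\<And>d. d\<in>DC \<Longrightarrow> colrel n M d (sc d)" using M unfolding Ev_def by auto
    have Mv: "M x y \<in> {-1,1}" if "x<n" "y<n" for x y using sm that unfolding sign_mats_def by auto
    have M0: "M x y = 0" if "\<not>(x<n \<and> y<n)" for x y using sm that unfolding sign_mats_def by auto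
    define \<tau> where "\<tau> = restrict (\<lambda>r. M r y0 * M (sr r) y0) DR"
    define \<sigma> where "\<sigma> = restrict (\<lambda>d. M x0 d * M x0 (sc d)) DC"
    define f where "f = restrict (\<lambda>(x,y). M x y) F"
    have rv: "M r y = \<tau> r * M (sr r) y" "\<tau> r \<in> {-1,1}" if "r\<in>DR" "y<n" for r y
      using rowrel_val[OF rr[OF that(1)] Mv[of "sr r" y0] that(2) y0(1)] sr[OF that(1)] y0 that(1)
      unfolding \<tau>_def by auto
    have cv: "M x d = \<sigma> d * M x (sc d)" "\<sigma> d \<in> {-1,1}" if "d\<in>DC" "x<n" for d x
      using colrel_val[OF cc[OF that(1)] Mv[of x0 "sc d"] that(2) x0(1)] sc[OF that(1)] x0 that(1)
      unfolding \<sigma>_def by auto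
    have inC: "(\<tau>,\<sigma>,f) \<in> Cod"
      unfolding Cod_def \<tau>_def \<sigma>_def f_def
      using rv(2)[OF _ y0(1)] cv(2)[OF _ x0(1)] Mv unfolding \<tau>_def \<sigma>_def F_def by auto
    have "ext (\<tau>,\<sigma>,f) = M"
    proof (intro ext)
      fix x y
      show "ext (\<tau>, \<sigma>, f) x y = M x y"
      proof (cases "x<n \<and> y<n")
        case False then show ?thesis using M0 unfolding ext_def by auto
      next
        case True
        then have xy: "x<n" "y<n" by auto
        have fM: "f (srp x, scp y) = M (srp x) (scp y)" using srpF[OF xy] unfolding f_def by auto
        show ?thesis
        proof (cases "x \<in> DR")
          case True
          note xr = True
          show ?thesis
          proof (cases "y\<in>DC")
            case True
            have "M x y = \<tau> x * M (sr x) y" using rv xr xy by auto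
            also have "M (sr x) y = \<sigma> y * M (sr x) (sc y)" using cv True sr[OF xr] by auto
            finally show ?thesis using xr True xy fM unfolding ext_def srp_def scp_def by simp
          next
            case False
            then show ?thesis using xr xy fM rv unfolding ext_def srp_def scp_def by simp
          qed
        next
          case False
          note xr = False
          show ?thesis
          proof (cases "y\<in>DC")
            case True
            then show ?thesis using xr xy fM cv unfolding ext_def srp_def scp_def by simp
          next
            case False
            then show ?thesis using xr xy fM unfolding ext_def srp_def scp_def by simp
          qed
        qed
      qed
    qed
    then show "M \<in> ext ` Cod" using inC by force
  qed
  have "Ev n DR DC sr sc = ext ` Cod" using sub1 sub2 by auto
  then have "card (Ev n DR DC sr sc) = card Cod" using card_image[OF inj] by simp
  then show ?thesis using cardCod by simp
qed


lemma sign_mats_Ev: "sign_mats n = Ev n {} {} sr sc"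
  unfolding Ev_def by auto

lemma card_sign_mats: "n \<ge> 1 \<Longrightarrow> card (sign_mats n) = 2 ^ (n*n)"
  using card_Ev[of "{}" n "{}" sr sc 0 0] sign_mats_Ev[of n sr sc] by simp

lemma finite_sign_mats: "n \<ge> 1 \<Longrightarrow> finite (sign_mats n)"
  using card_sign_mats[of n] card.infinite by fastforce

lemma nonempty_sign_mats: "n \<ge> 1 \<Longrightarrow> sign_mats n \<noteq> {}"
  using card_sign_mats[of n] by fastforce

lemma nat_id: "a \<le> n \<Longrightarrow> b \<le> n \<Longrightarrow> (n-a)*(n-b) + n*(a+b) = n*n + (a*b::nat)"
proof -
  assume "a \<le> n" "b \<le> n"
  then have e: "int (n-a) = int n - int a" "int (n-b) = int n - int b" by auto
  have "int ((n-a)*(n-b) + n*(a+b)) = int (n-a) * int (n-b) + int n * (int a + int b)"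
    by simp
  also have "\<dots> = int (n*n + a*b)" unfolding e by (simp add: algebra_simps)
  finally have "int ((n-a)*(n-b) + n*(a+b)) = int (n*n + a*b)" .
  then show ?thesis using of_nat_eq_iff by blast
qed

lemma pow_frac: "a \<le> n \<Longrightarrow> b \<le> n \<Longrightarrow>
  (2::real) ^ (a + b + (n-a)*(n-b)) / 2 ^ (n*n) = 2 ^ (a+b+a*b) * (1/2) ^ (n*(a+b))"
proof -
  assume h: "a \<le> n" "b \<le> n"
  have "(2::real) ^ (a + b + (n-a)*(n-b)) * 2 ^ (n*(a+b)) = 2 ^ (a+b+a*b) * 2 ^ (n*n)"
    unfolding power_add[symmetric] using nat_id[OF h] by (simp add: algebra_simps)
  then show ?thesis by (simp add: field_simps power_one_over)
qed

lemma half_pow: "((1::real)/2) ^ (n*k) = (1 / 2^k) ^ n"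
  by (simp add: power_mult[symmetric] mult.commute power_one_over)

lemma prob_Ev:
  assumes DR: "DR \<subseteq> {..<n}" and DC: "DC \<subseteq> {..<n}"
    and sr: "\<And>r. r\<in>DR \<Longrightarrow> sr r < n \<and> sr r \<notin> DR"
    and sc: "\<And>d. d\<in>DC \<Longrightarrow> sc d < n \<and> sc d \<notin> DC"
    and x0: "x0 < n" "x0 \<notin> DR" and y0: "y0 < n" "y0 \<notin> DC"
  shows "measure_pmf.prob (rand_mat n) (Ev n DR DC sr sc) =
     2 ^ (card DR + card DC + card DR * card DC) * (1 / 2 ^ (card DR + card DC)) ^ n"
proof -
  have n: "n \<ge> 1" using x0 by simp
  have fin: "finite DR" "finite DC" using DR DC finite_subset by auto
  have cle: "card DR \<le> n" "card DC \<le> n" using card_mono[OF _ DR] card_mono[OF _ DC] by auto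
  have "measure_pmf.prob (rand_mat n) (Ev n DR DC sr sc) = card (sign_mats n \<inter> Ev n DR DC sr sc) / card (sign_mats n)"
    unfolding rand_mat_def by (rule measure_pmf_of_set[OF nonempty_sign_mats[OF n] finite_sign_mats[OF n]])
  also have "sign_mats n \<inter> Ev n DR DC sr sc = Ev n DR DC sr sc" unfolding Ev_def by auto
  also have "real (card (Ev n DR DC sr sc)) / card (sign_mats n) =
      (2::real) ^ (card DR + card DC + (n - card DR) * (n - card DC)) / 2 ^ (n*n)"
    using card_Ev[OF assms] card_sign_mats[OF n] by simp
  also have "\<dots> = 2 ^ (card DR + card DC + card DR * card DC) * (1 / 2 ^ (card DR + card DC)) ^ n"
    using pow_frac[OF cle] half_pow by simp
  finally show ?thesis .
qed

lemma pair_choice: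
  fixes rel :: "'m \<Rightarrow> nat \<Rightarrow> nat \<Rightarrow> bool"
  assumes sym: "\<And>M a b. rel M a b \<Longrightarrow> rel M b a"
    and ij: "i < j" "j < n" and ij': "i' < j'" "j' < n" and ne: "(i,j) \<noteq> (i',j')"
  shows "\<exists>d1 d2 s1 s2. d1 \<noteq> d2 \<and> s1 \<noteq> d1 \<and> s1 \<noteq> d2 \<and> s2 \<noteq> d1 \<and> s2 \<noteq> d2 \<and>
     d1 < n \<and> d2 < n \<and> s1 < n \<and> s2 < n \<and>
     (\<forall>M. rel M i j \<and> rel M i' j' \<longrightarrow> rel M d1 s1 \<and> rel M d2 s2)"
proof (cases "j' \<notin> {i,j}")
  case True
  show ?thesis
  proof (cases "j = i'")
    case True
    show ?thesis
      apply (rule exI[of _ i], rule exI[of _ j'], rule exI[of _ j], rule exI[of _ i'])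
      using \<open>j' \<notin> {i,j}\<close> True ij ij' sym by auto
  next
    case False
    show ?thesis
      apply (rule exI[of _ j], rule exI[of _ j'], rule exI[of _ i], rule exI[of _ i'])
      using \<open>j' \<notin> {i,j}\<close> False ij ij' sym by auto
  qed
next
  case False
  show ?thesis
  proof (cases "j' = j")
    case True
    show ?thesis
      apply (rule exI[of _ i], rule exI[of _ i'], rule exI[of _ j], rule exI[of _ j'])
      using True ne ij ij' sym by auto
  next
    case False
    then have "j' = i" using \<open>\<not> j' \<notin> {i,j}\<close> by auto
    show ?thesis
      apply (rule exI[of _ j], rule exI[of _ i'], rule exI[of _ i], rule exI[of _ j'])
      using \<open>j' = i\<close> ne ij ij' sym by auto
  qed
qed

lemma rowrel_sym: "rowrel n M a b \<Longrightarrow> rowrel n M b a"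
proof -
  assume "rowrel n M a b"
  then obtain t where t: "t \<in> {-1,1}" "\<forall>y<n. M a y = t * M b y" unfolding rowrel_def by blast
  have "\<forall>y<n. M b y = t * M a y" using t by auto
  then show ?thesis unfolding rowrel_def using t(1) by blast
qed

lemma colrel_sym: "colrel n M a b \<Longrightarrow> colrel n M b a"
proof -
  assume "colrel n M a b"
  then obtain t where t: "t \<in> {-1,1}" "\<forall>y<n. M y a = t * M y b" unfolding colrel_def by blast
  have "\<forall>y<n. M y b = t * M y a" using t by auto
  then show ?thesis unfolding colrel_def using t(1) by blast
qed




definition A where "A n i j = {M \<in> sign_mats n. colrel n M i j}"
definition B where "B n i j = {M \<in> sign_mats n. rowrel n M i j}"
definition Pairs where "Pairs n = {(i,j). i < j \<and> j < (n::nat)}"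


lemma mono_prob: "X \<subseteq> Y \<Longrightarrow> measure_pmf.prob p X \<le> measure_pmf.prob p Y"
  by (rule measure_pmf.finite_measure_mono) auto

lemma probA:
  assumes "i < j" "j < n"
  shows "measure_pmf.prob (rand_mat n) (A n i j) = 2 * (1/2) ^ n"
proof -
  have se: "A n i j = Ev n {} {i} id (\<lambda>_. j)" unfolding A_def Ev_def by auto
  have eq: "measure_pmf.prob (rand_mat n) (Ev n {} {i} id (\<lambda>_. j)) = 2 * (1/2)^n"
    apply (subst prob_Ev[of "{}" n "{i}" id "\<lambda>_. j" 0 j])
    using assms by simp_all
  show ?thesis unfolding se eq ..
qed

lemma probAB:
  assumes "i < j" "j < n" "k < l" "l < n"
  shows "measure_pmf.prob (rand_mat n) (A n i j \<inter> B n k l) = 8 * (1/4) ^ n"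
proof -
  have se: "A n i j \<inter> B n k l = Ev n {k} {i} (\<lambda>_. l) (\<lambda>_. j)" unfolding A_def B_def Ev_def by auto
  have eq: "measure_pmf.prob (rand_mat n) (Ev n {k} {i} (\<lambda>_. l) (\<lambda>_. j)) = 8 * (1/4)^n"
    apply (subst prob_Ev[of "{k}" n "{i}" "\<lambda>_. l" "\<lambda>_. j" l j])
    using assms by simp_all
  show ?thesis unfolding se eq ..
qed

lemma probAA:
  assumes "(i,j) \<in> Pairs n" "(i',j') \<in> Pairs n" "(i,j) \<noteq> (i',j')"
  shows "measure_pmf.prob (rand_mat n) (A n i j \<inter> A n i' j') \<le> 4 * (1/4) ^ n"
proof -
  obtain d1 d2 s1 s2 where d: "d1 \<noteq> d2" "s1 \<noteq> d1" "s1 \<noteq> d2" "s2 \<noteq> d1" "s2 \<noteq> d2"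
     "d1 < n" "d2 < n" "s1 < n" "s2 < n"
     and rel: "\<forall>M. colrel n M i j \<and> colrel n M i' j' \<longrightarrow> colrel n M d1 s1 \<and> colrel n M d2 s2"
    using pair_choice[of "colrel n" i j n i' j', OF colrel_sym _ _ _ _ assms(3)] assms(1,2) unfolding Pairs_def by blast
  define sc where "sc d = (if d = d1 then s1 else s2)" for d
  have sub: "A n i j \<inter> A n i' j' \<subseteq> Ev n {} {d1,d2} id sc" unfolding A_def Ev_def sc_def using rel d by auto
  have eq: "measure_pmf.prob (rand_mat n) (Ev n {} {d1,d2} id sc) = 4 * (1/4)^n"
    apply (subst prob_Ev[of "{}" n "{d1,d2}" id sc 0 s1])
    using d unfolding sc_def by (simp_all add: card_insert_if)
  show ?thesis using mono_prob[OF sub, of "rand_mat n"] eq by simp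
qed

lemma probAAB:
  assumes "(i,j) \<in> Pairs n" "(i',j') \<in> Pairs n" "(i,j) \<noteq> (i',j')" "(k,l) \<in> Pairs n"
  shows "measure_pmf.prob (rand_mat n) (A n i j \<inter> A n i' j' \<inter> B n k l) \<le> 32 * (1/8) ^ n"
proof -
  obtain d1 d2 s1 s2 where d: "d1 \<noteq> d2" "s1 \<noteq> d1" "s1 \<noteq> d2" "s2 \<noteq> d1" "s2 \<noteq> d2"
     "d1 < n" "d2 < n" "s1 < n" "s2 < n"
     and rel: "\<forall>M. colrel n M i j \<and> colrel n M i' j' \<longrightarrow> colrel n M d1 s1 \<and> colrel n M d2 s2"
    using pair_choice[of "colrel n" i j n i' j', OF colrel_sym _ _ _ _ assms(3)] assms(1,2) unfolding Pairs_def by blast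
  have kl: "k < l" "l < n" using assms(4) unfolding Pairs_def by auto
  define sc where "sc d = (if d = d1 then s1 else s2)" for d
  have sub: "A n i j \<inter> A n i' j' \<inter> B n k l \<subseteq> Ev n {l} {d1,d2} (\<lambda>_. k) sc"
    unfolding A_def B_def Ev_def sc_def using rel d rowrel_sym by auto
  have eq: "measure_pmf.prob (rand_mat n) (Ev n {l} {d1,d2} (\<lambda>_. k) sc) = 32 * (1/8)^n"
    apply (subst prob_Ev[of "{l}" n "{d1,d2}" "\<lambda>_. k" sc k s1])
    using d kl unfolding sc_def by (simp_all add: card_insert_if)
  show ?thesis using mono_prob[OF sub, of "rand_mat n"] eq by simp
qed

lemma probABB:
  assumes "(i,j) \<in> Pairs n" "(i',j') \<in> Pairs n" "(i,j) \<noteq> (i',j')" "(k,l) \<in> Pairs n"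
  shows "measure_pmf.prob (rand_mat n) (A n k l \<inter> B n i j \<inter> B n i' j') \<le> 32 * (1/8) ^ n"
proof -
  obtain d1 d2 s1 s2 where d: "d1 \<noteq> d2" "s1 \<noteq> d1" "s1 \<noteq> d2" "s2 \<noteq> d1" "s2 \<noteq> d2"
     "d1 < n" "d2 < n" "s1 < n" "s2 < n"
     and rel: "\<forall>M. rowrel n M i j \<and> rowrel n M i' j' \<longrightarrow> rowrel n M d1 s1 \<and> rowrel n M d2 s2"
    using pair_choice[of "rowrel n" i j n i' j', OF rowrel_sym _ _ _ _ assms(3)] assms(1,2) unfolding Pairs_def by blast
  have kl: "k < l" "l < n" using assms(4) unfolding Pairs_def by auto
  define sr where "sr d = (if d = d1 then s1 else s2)" for d
  have sub: "A n k l \<inter> B n i j \<inter> B n i' j' \<subseteq> Ev n {d1,d2} {l} sr (\<lambda>_. k)"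
    unfolding A_def B_def Ev_def sr_def using rel d colrel_sym by auto
  have eq: "measure_pmf.prob (rand_mat n) (Ev n {d1,d2} {l} sr (\<lambda>_. k)) = 32 * (1/8)^n"
    apply (subst prob_Ev[of "{d1,d2}" n "{l}" sr "\<lambda>_. k" s1 k])
    using d kl unfolding sr_def by (simp_all add: card_insert_if)
  show ?thesis using mono_prob[OF sub, of "rand_mat n"] eq by simp
qed

lemma probAABB:
  assumes "(i,j) \<in> Pairs n" "(i',j') \<in> Pairs n" "(i,j) \<noteq> (i',j')"
    "(k,l) \<in> Pairs n" "(k',l') \<in> Pairs n" "(k,l) \<noteq> (k',l')"
  shows "measure_pmf.prob (rand_mat n) (A n i j \<inter> A n i' j' \<inter> (B n k l \<inter> B n k' l')) \<le> 256 * (1/16) ^ n"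
proof -
  obtain d1 d2 s1 s2 where d: "d1 \<noteq> d2" "s1 \<noteq> d1" "s1 \<noteq> d2" "s2 \<noteq> d1" "s2 \<noteq> d2"
     "d1 < n" "d2 < n" "s1 < n" "s2 < n"
     and rel: "\<forall>M. colrel n M i j \<and> colrel n M i' j' \<longrightarrow> colrel n M d1 s1 \<and> colrel n M d2 s2"
    using pair_choice[of "colrel n" i j n i' j', OF colrel_sym _ _ _ _ assms(3)] assms(1,2) unfolding Pairs_def by blast
  obtain r1 r2 t1 t2 where r: "r1 \<noteq> r2" "t1 \<noteq> r1" "t1 \<noteq> r2" "t2 \<noteq> r1" "t2 \<noteq> r2"
     "r1 < n" "r2 < n" "t1 < n" "t2 < n"
     and rel2: "\<forall>M. rowrel n M k l \<and> rowrel n M k' l' \<longrightarrow> rowrel n M r1 t1 \<and> rowrel n M r2 t2"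
    using pair_choice[of "rowrel n" k l n k' l', OF rowrel_sym _ _ _ _ assms(6)] assms(4,5) unfolding Pairs_def by blast
  define sc where "sc d = (if d = d1 then s1 else s2)" for d
  define sr where "sr d = (if d = r1 then t1 else t2)" for d
  have sub: "A n i j \<inter> A n i' j' \<inter> (B n k l \<inter> B n k' l') \<subseteq> Ev n {r1,r2} {d1,d2} sr sc"
    unfolding A_def B_def Ev_def sr_def sc_def using rel rel2 d r by auto
  have eq: "measure_pmf.prob (rand_mat n) (Ev n {r1,r2} {d1,d2} sr sc) = 256 * (1/16)^n"
    apply (subst prob_Ev[of "{r1,r2}" n "{d1,d2}" sr sc t1 s1])
    using d r unfolding sr_def sc_def by (simp_all add: card_insert_if)
  show ?thesis using mono_prob[OF sub, of "rand_mat n"] eq by simp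
qed



lemma bonf:
  fixes p :: "'a pmf" and E :: "'i \<Rightarrow> 'a set"
  assumes "finite I"
  shows "measure_pmf.prob p (\<Union>i\<in>I. E i) \<ge> (\<Sum>i\<in>I. measure_pmf.prob p (E i))
           - (\<Sum>i\<in>I. \<Sum>j\<in>I-{i}. measure_pmf.prob p (E i \<inter> E j))"
  using assms
proof (induction I rule: finite_induct)
  case empty
  show ?case by simp
next
  case (insert a I)
  let ?P = "measure_pmf.prob p"
  let ?U = "\<Union>i\<in>I. E i"
  define T where "T = (\<Sum>j\<in>I. ?P (E a \<inter> E j))"
  have T0: "T \<ge> 0" unfolding T_def by (simp add: sum_nonneg)
  have U: "(\<Union>i\<in>insert a I. E i) = E a \<union> ?U" by auto
  have "?P (E a \<union> ?U) = ?P (E a) + ?P (?U - E a)"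
    by (rule measure_pmf.finite_measure_Union') auto
  also have "?P (?U - E a) = ?P ?U - ?P (?U \<inter> E a)"
    by (rule measure_pmf.finite_measure_Diff') auto
  finally have eq: "?P (E a \<union> ?U) = ?P (E a) + ?P ?U - ?P (?U \<inter> E a)" by simp
  have int: "?P (?U \<inter> E a) \<le> T"
  proof -
    have "?U \<inter> E a = (\<Union>j\<in>I. E a \<inter> E j)" by auto
    then show ?thesis unfolding T_def
      using measure_pmf.finite_measure_subadditive_finite[OF insert(1), of "\<lambda>j. E a \<inter> E j"] by auto
  qed
  have S2: "(\<Sum>i\<in>insert a I. \<Sum>j\<in>insert a I - {i}. ?P (E i \<inter> E j))
      = T + (T + (\<Sum>i\<in>I. \<Sum>j\<in>I-{i}. ?P (E i \<inter> E j)))"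
  proof -
    have h1: "insert a I - {a} = I" using insert(2) by auto
    have h2: "(\<Sum>j\<in>insert a I - {i}. ?P (E i \<inter> E j)) = ?P (E a \<inter> E i) + (\<Sum>j\<in>I-{i}. ?P (E i \<inter> E j))"
      if "i \<in> I" for i
    proof -
      have "insert a I - {i} = insert a (I - {i})" using that insert(2) by auto
      then show ?thesis using insert(1,2) by (simp add: Int_commute)
    qed
    have "(\<Sum>i\<in>insert a I. \<Sum>j\<in>insert a I - {i}. ?P (E i \<inter> E j))
        = T + (\<Sum>i\<in>I. \<Sum>j\<in>insert a I - {i}. ?P (E i \<inter> E j))"
      using insert(1,2) h1 unfolding T_def by simp
    also have "(\<Sum>i\<in>I. \<Sum>j\<in>insert a I - {i}. ?P (E i \<inter> E j))
        = (\<Sum>i\<in>I. ?P (E a \<inter> E i) + (\<Sum>j\<in>I-{i}. ?P (E i \<inter> E j)))"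
      using h2 by (rule sum.cong[OF refl])
    also have "\<dots> = T + (\<Sum>i\<in>I. \<Sum>j\<in>I-{i}. ?P (E i \<inter> E j))"
      unfolding T_def by (simp add: sum.distrib)
    finally show ?thesis .
  qed
  have "(\<Sum>i\<in>insert a I. ?P (E i)) = ?P (E a) + (\<Sum>i\<in>I. ?P (E i))" using insert(1,2) by simp
  then show ?case unfolding U eq S2 using insert(3) int T0 by linarith
qed

lemma finite_Pairs: "finite (Pairs n)"
  by (rule finite_subset[of _ "{..<n} \<times> {..<n}"]) (auto simp: Pairs_def)

lemma card_Pairs: "card (Pairs n) = n choose 2"
proof (induction n)
  case 0
  then show ?case by (simp add: Pairs_def)
next
  case (Suc n)
  have "Pairs (Suc n) = Pairs n \<union> (\<lambda>i. (i,n)) ` {..<n}" unfolding Pairs_def by auto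
  moreover have "Pairs n \<inter> (\<lambda>i. (i,n)) ` {..<n} = {}" unfolding Pairs_def by auto
  ultimately have "card (Pairs (Suc n)) = card (Pairs n) + card ((\<lambda>i. (i,n)) ` {..<n})"
    using finite_Pairs card_Un_disjoint by (metis finite_imageI finite_lessThan)
  also have "card ((\<lambda>i. (i,n)) ` {..<n}) = n" by (subst card_image) (auto simp: inj_on_def)
  finally show ?case using Suc by (simp add: numeral_2_eq_2 choose_one)
qed

lemma colrel_iff: "colrel n M a b \<longleftrightarrow> ((\<forall>k<n. M k a = M k b) \<or> (\<forall>k<n. M k a = - M k b))"
  unfolding colrel_def by auto

lemma rowrel_iff: "rowrel n M a b \<longleftrightarrow> ((\<forall>k<n. M a k = M b k) \<or> (\<forall>k<n. M a k = - M b k))"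
  unfolding rowrel_def by auto

lemma R11_eq: "R11 n = (\<Union>p\<in>Pairs n. A n (fst p) (snd p))"
proof
  show "R11 n \<subseteq> (\<Union>p\<in>Pairs n. A n (fst p) (snd p))"
  proof
    fix M assume "M \<in> R11 n"
    then obtain i j where ij: "M \<in> sign_mats n" "i < n" "j < n" "i \<noteq> j" "colrel n M i j"
      unfolding R11_def colrel_iff by blast
    show "M \<in> (\<Union>p\<in>Pairs n. A n (fst p) (snd p))"
    proof (cases "i < j")
      case True
      then show ?thesis using ij by (intro UN_I[of "(i,j)"]) (auto simp: Pairs_def A_def)
    next
      case False
      then show ?thesis using ij colrel_sym[OF ij(5)] by (intro UN_I[of "(j,i)"]) (auto simp: Pairs_def A_def)
    qed
  qed
  show "(\<Union>p\<in>Pairs n. A n (fst p) (snd p)) \<subseteq> R11 n"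
  proof
    fix M assume "M \<in> (\<Union>p\<in>Pairs n. A n (fst p) (snd p))"
    then obtain i j where h: "i<j" "j<n" "M\<in>sign_mats n" "colrel n M i j" by (auto simp: Pairs_def A_def)
    then have "i < n" "i \<noteq> j" by auto
    then show "M \<in> R11 n" unfolding R11_def colrel_iff[symmetric] using h by blast
  qed
qed

lemma L11_eq: "L11 n = (\<Union>p\<in>Pairs n. B n (fst p) (snd p))"
proof
  show "L11 n \<subseteq> (\<Union>p\<in>Pairs n. B n (fst p) (snd p))"
  proof
    fix M assume "M \<in> L11 n"
    then obtain i j where ij: "M \<in> sign_mats n" "i < n" "j < n" "i \<noteq> j" "rowrel n M i j"
      unfolding L11_def rowrel_iff by blast
    show "M \<in> (\<Union>p\<in>Pairs n. B n (fst p) (snd p))"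
    proof (cases "i < j")
      case True
      then show ?thesis using ij by (intro UN_I[of "(i,j)"]) (auto simp: Pairs_def B_def)
    next
      case False
      then show ?thesis using ij rowrel_sym[OF ij(5)] by (intro UN_I[of "(j,i)"]) (auto simp: Pairs_def B_def)
    qed
  qed
  show "(\<Union>p\<in>Pairs n. B n (fst p) (snd p)) \<subseteq> L11 n"
  proof
    fix M assume "M \<in> (\<Union>p\<in>Pairs n. B n (fst p) (snd p))"
    then obtain i j where h: "i<j" "j<n" "M\<in>sign_mats n" "rowrel n M i j" by (auto simp: Pairs_def B_def)
    then have "i < n" "i \<noteq> j" by auto
    then show "M \<in> L11 n" unfolding L11_def rowrel_iff[symmetric] using h by blast
  qed
qed



definition AA where "AA n p = A n (fst p) (snd p)"
definition BB where "BB n p = B n (fst p) (snd p)"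

lemma R11_eq': "R11 n = (\<Union>p\<in>Pairs n. AA n p)" unfolding AA_def R11_eq ..
lemma L11_eq': "L11 n = (\<Union>p\<in>Pairs n. BB n p)" unfolding BB_def L11_eq ..

lemma RL_eq: "R11 n \<inter> L11 n = (\<Union>c\<in>Pairs n \<times> Pairs n. AA n (fst c) \<inter> BB n (snd c))"
  unfolding R11_eq' L11_eq' by auto

lemma Pairs_mem: "p \<in> Pairs n \<Longrightarrow> fst p < snd p \<and> snd p < n"
  unfolding Pairs_def by auto

lemma probAA': "p \<in> Pairs n \<Longrightarrow> measure_pmf.prob (rand_mat n) (AA n p) = 2 * (1/2)^n"
  unfolding AA_def using probA Pairs_mem by blast

lemma probAB': "p \<in> Pairs n \<Longrightarrow> q \<in> Pairs n \<Longrightarrow>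
   measure_pmf.prob (rand_mat n) (AA n p \<inter> BB n q) = 8 * (1/4)^n"
  unfolding AA_def BB_def using probAB Pairs_mem by blast

lemma probAA2: "p \<in> Pairs n \<Longrightarrow> p' \<in> Pairs n \<Longrightarrow> p \<noteq> p' \<Longrightarrow>
   measure_pmf.prob (rand_mat n) (AA n p \<inter> AA n p') \<le> 4 * (1/4)^n"
  unfolding AA_def using probAA[of "fst p" "snd p" n "fst p'" "snd p'"] by simp

lemma term_bound:
  assumes c: "c \<in> Pairs n \<times> Pairs n" and c': "c' \<in> Pairs n \<times> Pairs n" and ne: "c \<noteq> c'"
  shows "measure_pmf.prob (rand_mat n) ((AA n (fst c) \<inter> BB n (snd c)) \<inter> (AA n (fst c') \<inter> BB n (snd c')))
    \<le> (if fst c = fst c' then 32 * (1/8)^n else 0) + (if snd c = snd c' then 32 * (1/8)^n else 0)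
       + 256 * (1/16)^n"
proof -
  let ?P = "measure_pmf.prob (rand_mat n)"
  obtain i j k l i' j' k' l' where cc: "c = ((i,j),(k,l))" "c' = ((i',j'),(k',l'))"
    by (metis prod.collapse)
  have m: "(i,j) \<in> Pairs n" "(k,l) \<in> Pairs n" "(i',j') \<in> Pairs n" "(k',l') \<in> Pairs n"
    using c c' cc by auto
  define K :: real where "K = 32 * (1/8)^n"
  define L :: real where "L = 256 * (1/16)^n"
  have pos: "0 \<le> K" "0 \<le> L" unfolding K_def L_def by simp_all
  define X where "X = ?P ((AA n (fst c) \<inter> BB n (snd c)) \<inter> (AA n (fst c') \<inter> BB n (snd c')))"
  have main: "X \<le> (if fst c = fst c' then K else 0) + (if snd c = snd c' then K else 0) + L"
  proof (cases "(i,j) = (i',j')")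
    case True
    then have ne2: "(k,l) \<noteq> (k',l')" using ne cc by auto
    have "X = ?P (A n i j \<inter> B n k l \<inter> B n k' l')"
      unfolding X_def cc AA_def BB_def using True by (simp add: Int_ac)
    also have "\<dots> \<le> K" unfolding K_def using probABB[OF m(2) m(4) ne2 m(1)] .
    finally show ?thesis using True cc pos ne2 by auto
  next
    case False
    note f1 = False
    show ?thesis
    proof (cases "(k,l) = (k',l')")
      case True
      have "X = ?P (A n i j \<inter> A n i' j' \<inter> B n k l)"
        unfolding X_def cc AA_def BB_def using True by (simp add: Int_ac)
      also have "\<dots> \<le> K" unfolding K_def using probAAB[OF m(1) m(3) f1 m(2)] .
      finally show ?thesis using True cc pos f1 by auto
    next
      case False
      have "X = ?P (A n i j \<inter> A n i' j' \<inter> (B n k l \<inter> B n k' l'))"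
        unfolding X_def cc AA_def BB_def by (simp add: Int_ac)
      also have "\<dots> \<le> L" unfolding L_def using probAABB[OF m(1) m(3) f1 m(2) m(4) False] .
      finally show ?thesis using pos cc f1 False by auto
    qed
  qed
  then show ?thesis unfolding X_def K_def L_def .
qed


lemma sum_fst_delta:
  assumes "finite X" "finite Y" "a \<in> X"
  shows "(\<Sum>c\<in>X\<times>Y. if a = fst c then (K::real) else 0) = real (card Y) * K"
  using assms by (simp add: sum.cartesian_product' flip: sum_distrib_left)

lemma sum_snd_delta:
  assumes "finite X" "finite Y" "b \<in> Y"
  shows "(\<Sum>c\<in>X\<times>Y. if b = snd c then (K::real) else 0) = real (card X) * K"
  using assms by (simp add: sum.cartesian_product' sum.delta)

lemma PR_lower:
  fixes n :: nat
  defines "N \<equiv> real (card (Pairs n))"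
  shows "measure_pmf.prob (rand_mat n) (R11 n) \<ge> N * (2 * (1/2)^n) - N * (N - 1) * (4 * (1/4)^n)"
proof -
  let ?P = "measure_pmf.prob (rand_mat n)"
  let ?I = "Pairs n"
  have b: "?P (R11 n) \<ge> (\<Sum>p\<in>?I. ?P (AA n p)) - (\<Sum>p\<in>?I. \<Sum>p'\<in>?I-{p}. ?P (AA n p \<inter> AA n p'))"
    unfolding R11_eq' by (rule bonf[OF finite_Pairs])
  have s1: "(\<Sum>p\<in>?I. ?P (AA n p)) = N * (2 * (1/2)^n)"
  proof -
    have "(\<Sum>p\<in>?I. ?P (AA n p)) = (\<Sum>p\<in>?I. 2 * (1/2)^n)"
      by (rule sum.cong[OF refl]) (use probAA' in auto)
    then show ?thesis unfolding N_def by simp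
  qed
  have s2: "(\<Sum>p\<in>?I. \<Sum>p'\<in>?I-{p}. ?P (AA n p \<inter> AA n p')) \<le> (\<Sum>p\<in>?I. (N - 1) * (4 * (1/4)^n))"
  proof (rule sum_mono)
    fix p assume p: "p \<in> ?I"
    have "(\<Sum>p'\<in>?I-{p}. ?P (AA n p \<inter> AA n p')) \<le> (\<Sum>p'\<in>?I-{p}. 4 * (1/4)^n)"
    proof (rule sum_mono)
      fix p' assume "p' \<in> ?I - {p}"
      then show "?P (AA n p \<inter> AA n p') \<le> 4 * (1/4)^n" using probAA2[OF p, of p'] by auto
    qed
    also have "\<dots> = real (card (?I - {p})) * (4 * (1/4)^n)" by simp
    also have "real (card (?I - {p})) = N - 1"
    proof -
      have "card ?I \<ge> 1" using p finite_Pairs card_0_eq by (metis less_one not_le empty_iff)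
      then show ?thesis unfolding N_def using p finite_Pairs by (simp add: card_Diff_singleton of_nat_diff)
    qed
    finally show "(\<Sum>p'\<in>?I-{p}. ?P (AA n p \<inter> AA n p')) \<le> (N - 1) * (4 * (1/4)^n)" .
  qed
  have s3: "(\<Sum>p\<in>?I. (N - 1) * (4 * (1/4)^n)) = N * (N - 1) * (4 * (1/4)^n)"
    unfolding N_def by simp
  show ?thesis using b s1 s2 s3 by linarith
qed

lemma PRL_upper:
  fixes n :: nat
  defines "N \<equiv> real (card (Pairs n))"
  shows "measure_pmf.prob (rand_mat n) (R11 n \<inter> L11 n) \<le> N * N * (8 * (1/4)^n)"
proof -
  let ?P = "measure_pmf.prob (rand_mat n)"
  let ?I = "Pairs n \<times> Pairs n"
  have "?P (R11 n \<inter> L11 n) \<le> (\<Sum>c\<in>?I. ?P (AA n (fst c) \<inter> BB n (snd c)))"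
    unfolding RL_eq by (rule measure_pmf.finite_measure_subadditive_finite) (auto simp: finite_Pairs)
  also have "\<dots> = (\<Sum>c\<in>?I. 8 * (1/4)^n)"
    by (rule sum.cong[OF refl]) (use probAB' in auto)
  also have "\<dots> = N * N * (8 * (1/4)^n)" unfolding N_def by (simp add: card_cartesian_product)
  finally show ?thesis .
qed

lemma PRL_lower:
  fixes n :: nat
  defines "N \<equiv> real (card (Pairs n))"
  shows "measure_pmf.prob (rand_mat n) (R11 n \<inter> L11 n) \<ge> N * N * (8 * (1/4)^n)
     - N * N * (2 * N * (32 * (1/8)^n) + N * N * (256 * (1/16)^n))"
proof -
  let ?P = "measure_pmf.prob (rand_mat n)"
  let ?I = "Pairs n \<times> Pairs n"
  define K :: real where "K = 32 * (1/8)^n"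
  define L :: real where "L = 256 * (1/16)^n"
  have K0: "K \<ge> 0" and L0: "L \<ge> 0" unfolding K_def L_def by simp_all
  define E where "E c = AA n (fst c) \<inter> BB n (snd c)" for c
  have finI: "finite ?I" using finite_Pairs by simp
  have b: "?P (R11 n \<inter> L11 n) \<ge> (\<Sum>c\<in>?I. ?P (E c)) - (\<Sum>c\<in>?I. \<Sum>c'\<in>?I-{c}. ?P (E c \<inter> E c'))"
    unfolding RL_eq E_def by (rule bonf[OF finI])
  have s1: "(\<Sum>c\<in>?I. ?P (E c)) = N * N * (8 * (1/4)^n)"
  proof -
    have "(\<Sum>c\<in>?I. ?P (E c)) = (\<Sum>c\<in>?I. 8 * (1/4)^n)"
      by (rule sum.cong[OF refl]) (use probAB' in \<open>auto simp: E_def\<close>)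
    then show ?thesis unfolding N_def by (simp add: card_cartesian_product)
  qed
  have s2: "(\<Sum>c\<in>?I. \<Sum>c'\<in>?I-{c}. ?P (E c \<inter> E c')) \<le> (\<Sum>c\<in>?I. 2 * N * K + N * N * L)"
  proof (rule sum_mono)
    fix c assume c: "c \<in> ?I"
    define g where "g c' = (if fst c = fst c' then K else 0) + (if snd c = snd c' then K else 0) + L" for c'
    have g0: "g c' \<ge> 0" for c' unfolding g_def using K0 L0 by simp
    have "(\<Sum>c'\<in>?I-{c}. ?P (E c \<inter> E c')) \<le> (\<Sum>c'\<in>?I-{c}. g c')"
    proof (rule sum_mono)
      fix c' assume c': "c' \<in> ?I - {c}"
      show "?P (E c \<inter> E c') \<le> g c'"
        using term_bound[OF c, of c'] c' unfolding E_def g_def K_def L_def by auto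
    qed
    also have "\<dots> \<le> (\<Sum>c'\<in>?I. g c')"
      by (rule sum_mono2[OF finI]) (use g0 in auto)
    also have "\<dots> = (\<Sum>c'\<in>?I. if fst c = fst c' then K else 0) + (\<Sum>c'\<in>?I. if snd c = snd c' then K else 0)
        + (\<Sum>c'\<in>?I. L)"
      unfolding g_def by (simp add: sum.distrib)
    also have "\<dots> = 2 * N * K + N * N * L"
      using sum_fst_delta[OF finite_Pairs finite_Pairs, where a="fst c" and K=K]
        sum_snd_delta[OF finite_Pairs finite_Pairs, where b="snd c" and K=K] c
      unfolding N_def by (auto simp: card_cartesian_product)
    finally show "(\<Sum>c'\<in>?I-{c}. ?P (E c \<inter> E c')) \<le> 2 * N * K + N * N * L" .
  qed
  have s3: "(\<Sum>c\<in>?I. 2 * N * K + N * N * L) = N * N * (2 * N * K + N * N * L)"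
    unfolding N_def by (simp add: card_cartesian_product)
  show ?thesis using b s1 s2 s3 unfolding K_def L_def by linarith
qed



lemma sq_le_pow2: "4 \<le> n \<Longrightarrow> n^2 \<le> (2::nat)^n"
proof (induction n rule: nat_induct_at_least)
  case base
  then show ?case by simp
next
  case (Suc n)
  have h: "4 * n \<le> n * n" using Suc.hyps by (rule mult_right_mono) simp
  have "(Suc n)^2 = n * n + 2 * n + 1" by (simp add: power2_eq_square)
  also have "\<dots> \<le> 2 * n^2" using h Suc.hyps unfolding power2_eq_square by linarith
  finally have "(Suc n)^2 \<le> 2 * n^2" .
  also have "\<dots> \<le> 2 * 2^n" using Suc.IH by simp
  finally show ?case by simp
qed

lemma part1:
  assumes "n \<ge> 2"
  shows "measure_pmf.prob (rand_mat n) (R11 n - L11 n) \<ge>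
             2 * real (n choose 2) * (1/2) ^ n
             - (12 * real (n choose 2) ^ 2 - 4 * real (n choose 2)) * (1/4) ^ n"
proof -
  let ?P = "measure_pmf.prob (rand_mat n)"
  define N where "N = real (card (Pairs n))"
  have NN: "real (n choose 2) = N" unfolding N_def card_Pairs ..
  have D: "?P (R11 n - L11 n) = ?P (R11 n) - ?P (R11 n \<inter> L11 n)"
    by (rule measure_pmf.finite_measure_Diff') auto
  have e: "N * (2 * (1/2)^n) - N * (N - 1) * (4 * (1/4)^n) - N * N * (8 * (1/4)^n)
      = 2 * N * (1/2) ^ n - (12 * N ^ 2 - 4 * N) * (1/4) ^ n"
    by (simp add: algebra_simps power2_eq_square)
  show ?thesis unfolding NN D using PR_lower[of n] PRL_upper[of n] e unfolding N_def[symmetric] by linarith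
qed

lemma part2_bound:
  assumes "n \<ge> 4"
  shows "\<bar>measure_pmf.prob (rand_mat n) (R11 n - L11 n)
               - (measure_pmf.prob (rand_mat n) (R11 n)
                  - 8 * real (n choose 2) ^ 2 * (1/4) ^ n)\<bar>
        \<le> 320 * (real n ^ 6 * (1/8)^n)"
proof -
  let ?P = "measure_pmf.prob (rand_mat n)"
  define N where "N = real (card (Pairs n))"
  define a :: real where "a = (1/8)^n"
  define h :: real where "h = (1/2)^n"
  have a0: "a \<ge> 0" and h0: "h \<ge> 0" unfolding a_def h_def by simp_all
  have NN: "real (n choose 2) = N" unfolding N_def card_Pairs ..
  have D: "?P (R11 n - L11 n) = ?P (R11 n) - ?P (R11 n \<inter> L11 n)"
    by (rule measure_pmf.finite_measure_Diff') auto
  have N0: "N \<ge> 0" unfolding N_def by simp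
  have Nle: "N \<le> real n ^ 2"
  proof -
    have "n choose 2 \<le> n ^ 2" by (rule binomial_le_pow) (use assms in simp)
    then show ?thesis using NN by (metis of_nat_le_iff of_nat_power)
  qed
  have h16: "(1/16::real)^n = a * h" unfolding a_def h_def by (simp add: power_mult_distrib[symmetric])
  have nh: "real n ^ 2 * h \<le> 1"
  proof -
    have "real (n^2) \<le> real (2^n)" using sq_le_pow2[OF assms] by (simp only: of_nat_le_iff)
    then have "real n ^ 2 \<le> 2 ^ n" by simp
    then show ?thesis unfolding h_def by (simp add: field_simps power_one_over)
  qed
  have up: "?P (R11 n \<inter> L11 n) \<le> N * N * (8 * (1/4)^n)" using PRL_upper[of n] unfolding N_def .
  have lo: "?P (R11 n \<inter> L11 n) \<ge> N * N * (8 * (1/4)^n) - N * N * (2 * N * (32 * a) + N * N * (256 * (a * h)))"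
    using PRL_lower[of n] unfolding N_def[symmetric] a_def[symmetric] h16 .
  have N3: "N ^ 3 \<le> real n ^ 6"
  proof -
    have "N ^ 3 \<le> (real n ^ 2) ^ 3" by (rule power_mono[OF Nle N0])
    then show ?thesis by (simp add: power_mult[symmetric])
  qed
  have N4: "N ^ 4 \<le> real n ^ 8"
  proof -
    have "N ^ 4 \<le> (real n ^ 2) ^ 4" by (rule power_mono[OF Nle N0])
    then show ?thesis by (simp add: power_mult[symmetric])
  qed
  have t1: "N ^ 3 * a \<le> real n ^ 6 * a" using N3 a0 by (rule mult_right_mono)
  have t2: "N ^ 4 * (a * h) \<le> real n ^ 6 * a"
  proof -
    have "N ^ 4 * (a * h) \<le> real n ^ 8 * (a * h)" using N4 a0 h0 by (intro mult_right_mono) simp_all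
    also have "\<dots> = (real n ^ 6 * a) * (real n ^ 2 * h)" by (simp add: algebra_simps power_add[symmetric])
    also have "\<dots> \<le> (real n ^ 6 * a) * 1" using nh a0 by (intro mult_left_mono) simp_all
    finally show ?thesis by simp
  qed
  have err: "N * N * (2 * N * (32 * a) + N * N * (256 * (a * h))) = 64 * (N ^ 3 * a) + 256 * (N ^ 4 * (a * h))"
    by (simp add: algebra_simps power2_eq_square power3_eq_cube power4_eq_xxxx)
  have eq: "?P (R11 n - L11 n) - (?P (R11 n) - 8 * real (n choose 2) ^ 2 * (1/4) ^ n)
        = N * N * (8 * (1/4)^n) - ?P (R11 n \<inter> L11 n)"
    unfolding D NN by (simp add: power2_eq_square)
  show ?thesis unfolding eq a_def[symmetric] using up lo err t1 t2 by linarith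
qed

lemma part2:
  "(\<lambda>n. measure_pmf.prob (rand_mat n) (R11 n - L11 n)
               - (measure_pmf.prob (rand_mat n) (R11 n)
                  - 8 * real (n choose 2) ^ 2 * (1/4) ^ n))
           \<in> O(\<lambda>n. real n ^ 6 * 2 powr (- 3 * real n))"
proof (rule bigoI[where c = 320])
  show "\<forall>\<^sub>F n in at_top. norm (measure_pmf.prob (rand_mat n) (R11 n - L11 n)
               - (measure_pmf.prob (rand_mat n) (R11 n)
                  - 8 * real (n choose 2) ^ 2 * (1/4) ^ n))
        \<le> 320 * norm (real n ^ 6 * 2 powr (- 3 * real n))"
  proof (rule eventually_mono[OF eventually_ge_at_top[of 4]])
    fix n :: nat assume n: "4 \<le> n"
    have pw: "(2::real) powr (- 3 * real n) = (1/8)^n"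
    proof -
      have "(2::real) powr (- 3 * real n) = inverse (2 powr (real (3 * n)))"
        by (simp add: powr_minus[symmetric])
      also have "2 powr (real (3*n)) = (2::real) ^ (3*n)" by (rule powr_realpow) simp
      also have "(2::real) ^ (3*n) = 8 ^ n" by (simp add: power_mult)
      finally show ?thesis by (simp add: power_one_over inverse_eq_divide)
    qed
    show "norm (measure_pmf.prob (rand_mat n) (R11 n - L11 n)
               - (measure_pmf.prob (rand_mat n) (R11 n)
                  - 8 * real (n choose 2) ^ 2 * (1/4) ^ n))
        \<le> 320 * norm (real n ^ 6 * 2 powr (- 3 * real n))"
      using part2_bound[OF n] unfolding pw by simp
  qed
qed

theorem mainTheorem13:
  shows "(\<forall>n::nat. n \<ge> 2 \<longrightarrow>
           measure_pmf.prob (rand_mat n) (R11 n - L11 n) \<ge>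
             2 * real (n choose 2) * (1/2) ^ n
             - (12 * real (n choose 2) ^ 2 - 4 * real (n choose 2)) * (1/4) ^ n)
       \<and> (\<lambda>n. measure_pmf.prob (rand_mat n) (R11 n - L11 n)
               - (measure_pmf.prob (rand_mat n) (R11 n)
                  - 8 * real (n choose 2) ^ 2 * (1/4) ^ n))
           \<in> O(\<lambda>n. real n ^ 6 * 2 powr (- 3 * real n))"
  using part1 part2 by blast

end
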